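(* Let $\rho$ be a state and $\phi$ a pure state not in $\mathcal F$ (of the output space). If there exists a probabilistic resource--non-generating transformation $\rho\to\tau$, where $\tau$ is a state with $F(\tau,\phi)\ge1-\varepsilon$, then $\varepsilon\ge\frac{1-F_{\mathcal F}(\phi)}{\Omega_{\mathcal F}(\rho)}\ge\frac{\lambda_{\min}(\rho)(1-F_{\mathcal F}(\phi))}{R_{\mathcal F}(\rho)}$, where $\lambda_{\min}(\rho)$ is the smallest eigenvalue of $\rho$.
   Context: Finite dimensions; $A\le B$ means $B-A\ge0$. Each space carries a closed convex set $\mathcal F$ of free density operators. $R_{\max}(X\|Y)=\inf\{\lambda:X\le\lambda Y\}$, conventions $\inf\emptyset=\infty$, $0^{-1}=\infty$, $\infty^{-1}=0$. $R_{\mathcal F}(\rho)=\min_{\sigma\in\mathcal F}R_{\max}(\rho\|\sigma)$; $\Omega_{\mathcal F}(\rho)=\inf_{\sigma\in\mathcal F}R_{\max}(\rho\|\sigma)R_{\max}(\sigma\|\rho)$; $F_{\mathcal F}(\phi)=\max_{\sigma\in\mathcal F}\langle\phi|\sigma|\phi\rangle$. Fidelity $F(\rho,\sigma)=\|\sqrt\rho\sqrt\sigma\|_1^2$. $\mathbb O$: completely positive trace-non-increasing maps $\mathcal E$ such that for every free input $\sigma$ there exist a free output $\sigma'$ and $p\in[0,1]$ with $\mathcal E(\sigma)=p\sigma'$. A probabilistic transformation $\rho\to\tau$ exists iff $\tau$ lies in the closure of $\{\mathcal E(\rho)/\mathrm{Tr}\,\mathcal E(\rho):\mathcal E\in\mathbb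 O,\ \mathrm{Tr}\,\mathcal E(\rho)>0\}$. *)

theory Defs
  imports "HOL-Analysis.Analysis"
begin

type_synonym 'n cmat = "complex^'n^'n"

definition cinner :: "complex^('n::finite) \<Rightarrow> complex^('n::finite) \<Rightarrow> complex" where
  "cinner v w = (\<Sum>i\<in>UNIV. cnj (v$i) * w$i)"

definition cscale :: "complex \<Rightarrow> ('n::finite) cmat \<Rightarrow> ('n::finite) cmat" where
  "cscale c A = (\<chi> i j. c * A$i$j)"

definition adj :: "complex^('n::finite)^('m::finite) \<Rightarrow> complex^('m::finite)^('n::finite)" where
  "adj A = (\<chi> i j. cnj (A$j$i))"

definition psd :: "('n::finite) cmat \<Rightarrow> bool" where
  "psd A \<longleftrightarrow> (\<forall>v. Im (cinner v (A *v v)) = 0 \<and> Re (cinner v (A *v v)) \<ge> 0)"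

definition loewner_le :: "('n::finite) cmat \<Rightarrow> ('n::finite) cmat \<Rightarrow> bool" where
  "loewner_le A B \<longleftrightarrow> psd (B - A)"

definition density :: "('n::finite) cmat \<Rightarrow> bool" where
  "density \<rho> \<longleftrightarrow> psd \<rho> \<and> trace \<rho> = 1"

definition proj :: "complex^('n::finite) \<Rightarrow> ('n::finite) cmat" where
  "proj \<phi> = (\<chi> i j. \<phi>$i * cnj (\<phi>$j))"

definition pure_state :: "complex^('n::finite) \<Rightarrow> bool" where
  "pure_state \<phi> \<longleftrightarrow> norm \<phi> = 1"

definition expval :: "complex^('n::finite) \<Rightarrow> ('n::finite) cmat \<Rightarrow> real" where
  "expval \<phi> A = Re (cinner \<phi> (A *v \<phi>))"

definition lambda_min :: "('n::finite) cmat \<Rightarrow> real" where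
  "lambda_min A = Inf {x::real. \<exists>v. v \<noteq> 0 \<and> A *v v = complex_of_real x *s v}"

definition msqrt :: "('n::finite) cmat \<Rightarrow> ('n::finite) cmat" where
  "msqrt A = (THE B. psd B \<and> B ** B = A)"

definition trace_norm :: "('n::finite) cmat \<Rightarrow> real" where
  "trace_norm X = Re (trace (msqrt (adj X ** X)))"

definition fidelity :: "('n::finite) cmat \<Rightarrow> ('n::finite) cmat \<Rightarrow> real" where
  "fidelity \<rho> \<sigma> = (trace_norm (msqrt \<rho> ** msqrt \<sigma>))\<^sup>2"

text \<open>R_max(X||Y) = inf {lambda. X \<le> lambda Y}, with inf of the empty set = \<infinity>.\<close>
definition Rmax :: "('n::finite) cmat \<Rightarrow> ('n::finite) cmat \<Rightarrow> ereal" where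
  "Rmax X Y = Inf (ereal ` {l::real. loewner_le X (l *\<^sub>R Y)})"

definition RF :: "('n::finite) cmat set \<Rightarrow> ('n::finite) cmat \<Rightarrow> ereal" where
  "RF F \<rho> = (INF \<sigma>\<in>F. Rmax \<rho> \<sigma>)"

definition OmegaF :: "('n::finite) cmat set \<Rightarrow> ('n::finite) cmat \<Rightarrow> ereal" where
  "OmegaF F \<rho> = (INF \<sigma>\<in>F. Rmax \<rho> \<sigma> * Rmax \<sigma> \<rho>)"

definition FF :: "('n::finite) cmat set \<Rightarrow> complex^('n::finite) \<Rightarrow> real" where
  "FF F \<phi> = (SUP \<sigma>\<in>F. expval \<phi> \<sigma>)"

definition free_set :: "('n::finite) cmat set \<Rightarrow> bool" where
  "free_set F \<longleftrightarrow> F \<noteq> {} \<and> closed F \<and> convex F \<and> (\<forall>\<sigma>\<in>F. density \<sigma>)"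

definition clinear_map :: "(('n::finite) cmat \<Rightarrow> ('m::finite) cmat) \<Rightarrow> bool" where
  "clinear_map E \<longleftrightarrow> (\<forall>A B. E (A + B) = E A + E B) \<and> (\<forall>c A. E (cscale c A) = cscale c (E A))"

text \<open>A k x k block operator (blocks X i j, i,j < k) on C^k \<otimes> C^n is positive
  semidefinite.\<close>
definition block_psd :: "nat \<Rightarrow> (nat \<Rightarrow> nat \<Rightarrow> ('n::finite) cmat) \<Rightarrow> bool" where
  "block_psd k X \<longleftrightarrow> (\<forall>v :: nat \<Rightarrow> complex^'n.
     Im (\<Sum>i<k. \<Sum>j<k. cinner (v i) (X i j *v v j)) = 0 \<and>
     Re (\<Sum>i<k. \<Sum>j<k. cinner (v i) (X i j *v v j)) \<ge> 0)"

text \<open>Completely positive: linear, and id_k \<otimes> E is positive for every k.\<close>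
definition completely_positive :: "(('n::finite) cmat \<Rightarrow> ('m::finite) cmat) \<Rightarrow> bool" where
  "completely_positive E \<longleftrightarrow> clinear_map E \<and>
     (\<forall>k X. block_psd k X \<longrightarrow> block_psd k (\<lambda>i j. E (X i j)))"

definition trace_nonincreasing :: "(('n::finite) cmat \<Rightarrow> ('m::finite) cmat) \<Rightarrow> bool" where
  "trace_nonincreasing E \<longleftrightarrow> (\<forall>X. psd X \<longrightarrow> Re (trace (E X)) \<le> Re (trace X))"

definition RNG_ops :: "('n::finite) cmat set \<Rightarrow> ('m::finite) cmat set \<Rightarrow> (('n::finite) cmat \<Rightarrow> ('m::finite) cmat) set" where
  "RNG_ops Fin Fout = {E. completely_positive E \<and> trace_nonincreasing E \<and>
     (\<forall>\<sigma>\<in>Fin. \<exists>\<sigma>'\<in>Fout. \<exists>p::real. 0 \<le> p \<and> p \<le> 1 \<and> E \<sigma> = p *\<^sub>R \<sigma>')}"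

definition prob_transform :: "('n::finite) cmat set \<Rightarrow> ('m::finite) cmat set \<Rightarrow> ('n::finite) cmat \<Rightarrow> ('m::finite) cmat \<Rightarrow> bool" where
  "prob_transform Fin Fout \<rho> \<tau> \<longleftrightarrow>
     \<tau> \<in> closure {(1 / Re (trace (E \<rho>))) *\<^sub>R E \<rho> | E.
                    E \<in> RNG_ops Fin Fout \<and> Re (trace (E \<rho>)) > 0}"

end

theory Submission
  imports Defs
begin

type_synonym 'n cvec = "complex^'n"

lemma cinner_add_right: "cinner v (w1 + w2) = cinner v w1 + cinner v w2"
  by (simp add: cinner_def distrib_left sum.distrib)
lemma cinner_add_left: "cinner (v1 + v2) w = cinner v1 w + cinner v2 w"
  by (simp add: cinner_def distrib_right sum.distrib)
lemma cinner_diff_right: "cinner v (w1 - w2) = cinner v w1 - cinner v w2"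
  by (simp add: cinner_def right_diff_distrib sum_subtractf)
lemma cinner_diff_left: "cinner (v1 - v2) w = cinner v1 w - cinner v2 w"
  by (simp add: cinner_def left_diff_distrib sum_subtractf)
lemma cinner_scale_right: "cinner v (c *s w) = c * cinner v w"
  by (simp add: cinner_def sum_distrib_left mult_ac)
lemma cinner_scale_left: "cinner (c *s v) w = cnj c * cinner v w"
  by (simp add: cinner_def sum_distrib_left mult_ac)
lemma cinner_zero_right[simp]: "cinner v 0 = 0"
  by (simp add: cinner_def)
lemma cinner_zero_left[simp]: "cinner 0 v = 0"
  by (simp add: cinner_def)
lemma cinner_sum_right: "cinner v (\<Sum>i\<in>I. f i) = (\<Sum>i\<in>I. cinner v (f i))"
  by (induction I rule: infinite_finite_induct) (auto simp: cinner_add_right)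
lemma cinner_sum_left: "cinner (\<Sum>i\<in>I. f i) w = (\<Sum>i\<in>I. cinner (f i) w)"
  by (induction I rule: infinite_finite_induct) (auto simp: cinner_add_left)
lemma cinner_commute: "cinner w v = cnj (cinner v w)"
  by (simp add: cinner_def mult_ac)
lemma Re_cinner: "Re (cinner v w) = inner v w"
  by (simp add: cinner_def inner_vec_def inner_complex_def Re_sum)
lemma cinner_self: "cinner v v = complex_of_real ((norm v)^2)"
proof -
  have "cinner v v = (\<Sum>i\<in>UNIV. complex_of_real ((cmod (v$i))^2))"
    unfolding cinner_def by (rule sum.cong) (auto simp: complex_norm_square mult.commute simp del: of_real_power)
  also have "\<dots> = complex_of_real ((norm v)^2)"
    by (simp add: norm_vec_def L2_set_def sum_nonneg)
  finally show ?thesis .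
qed
lemma cinner_self_eq0: "cinner v v = 0 \<longleftrightarrow> v = 0"
  by (simp add: cinner_self)

lemma mv_scale: "(A::'n::finite cmat) *v (c *s x) = c *s (A *v x)"
  by (simp add: matrix_vector_mult_def vec_eq_iff sum_distrib_left mult_ac)
lemma mv_sum: "(A::'n::finite cmat) *v (\<Sum>i\<in>I. f i) = (\<Sum>i\<in>I. A *v f i)"
  by (induction I rule: infinite_finite_induct) (auto simp: matrix_vector_right_distrib)
lemma sum_mv: "(\<Sum>i\<in>I. f i) *v (x::complex^'n::finite) = (\<Sum>i\<in>I. f i *v x)"
  by (induction I rule: infinite_finite_induct) (auto simp: matrix_vector_mult_add_rdistrib)
lemma scaleR_vec_s: "c *\<^sub>R (x::complex^'n) = complex_of_real c *s x"
  by (simp add: vec_eq_iff) (simp add: scaleR_conv_of_real)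
lemma scaleR_mv: "(c *\<^sub>R (A::'n::finite cmat)) *v x = complex_of_real c *s (A *v x)"
proof -
  have e: "(c *\<^sub>R A)$i$j = complex_of_real c * A$i$j" for i j
  proof -
    have "(c *\<^sub>R A)$i$j = c *\<^sub>R (A$i$j)" by simp
    also have "\<dots> = complex_of_real c * A$i$j" by (rule scaleR_conv_of_real)
    finally show ?thesis .
  qed
  show ?thesis unfolding matrix_vector_mult_def by (simp add: vec_eq_iff e sum_distrib_left mult_ac) (simp add: scaleR_conv_of_real mult_ac)
qed
lemma adj_mv: "cinner v ((A::'n::finite cmat) *v w) = cinner (adj A *v v) w"
  unfolding cinner_def adj_def matrix_vector_mult_def
  apply (simp add: sum_distrib_left sum_distrib_right cnj_sum)
  apply (subst sum.swap)
  apply (simp add: mult_ac)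
  done

definition herm :: "'n::finite cmat \<Rightarrow> bool" where "herm A \<longleftrightarrow> adj A = A"

lemma herm_cinner: "herm A \<Longrightarrow> cinner v (A *v w) = cnj (cinner w (A *v v))"
  by (metis adj_mv cinner_commute herm_def)
lemma herm_real: "herm A \<Longrightarrow> Im (cinner v (A *v v)) = 0"
  using herm_cinner[of A v v] by (metis cnj.sel(2) neg_equal_zero)

lemma cinner_axis: "cinner (axis i 1) w = w $ i"
proof -
  have "cinner (axis i 1) w = (\<Sum>k\<in>UNIV. if k = i then w$k else 0)"
    unfolding cinner_def axis_def by (rule sum.cong) auto
  then show ?thesis by simp
qed
lemma mv_axis: "(A *v axis j 1) $ i = A $ i $ j"
  by (simp add: matrix_vector_mult_def axis_def if_distrib sum.delta cong: if_cong)

lemma psd_herm: assumes "psd A" shows "herm A"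
proof -
  let ?Q = "\<lambda>v. cinner v (A *v v)"
  have im: "Im (?Q v) = 0" for v using assms psd_def by blast
  have ent: "A $ j $ i = cnj (A $ i $ j)" for i j
  proof -
    define a where "a = axis i (1::complex)"
    define b where "b = axis j (1::complex)"
    have q: "?Q (x + c *s y) = ?Q x + c * cinner x (A *v y) + cnj c * cinner y (A *v x) + cnj c * c * ?Q y" for x y c
      by (simp add: matrix_vector_right_distrib mv_scale cinner_add_left cinner_add_right
          cinner_scale_left cinner_scale_right algebra_simps)
    have aij: "cinner a (A *v b) = A$i$j" unfolding a_def b_def by (simp add: cinner_axis mv_axis)
    have aji: "cinner b (A *v a) = A$j$i" unfolding a_def b_def by (simp add: cinner_axis mv_axis)
    have 1: "Im (A$i$j + A$j$i) = 0"
    proof -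
      have "Im (?Q (a + 1 *s b)) = Im (?Q a) + Im (A$i$j + A$j$i) + Im (?Q b)"
        by (simp only: q aij aji) simp
      then show ?thesis using im[of "a + 1 *s b"] im[of a] im[of b] by simp
    qed
    have 2: "Re (A$i$j - A$j$i) = 0"
    proof -
      have "Im (?Q (a + \<i> *s b)) = Im (?Q a) + Re (A$i$j - A$j$i) + Im (?Q b)"
        by (simp only: q aij aji) simp
      then show ?thesis using im[of "a + \<i> *s b"] im[of a] im[of b] by simp
    qed
    show ?thesis using 1 2 by (simp add: complex_eq_iff)
  qed
  have ent2: "cnj (A $ j $ i) = A $ i $ j" for i j using ent[of i j] by simp
  show ?thesis unfolding herm_def adj_def by (simp add: vec_eq_iff ent2)
qed


lemma herm_quad:
  assumes "herm M"
  shows "Re (cinner (u + complex_of_real t *s w) (M *v (u + complex_of_real t *s w)))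
     = Re (cinner u (M *v u)) + 2 * t * Re (cinner w (M *v u)) + t^2 * Re (cinner w (M *v w))"
proof -
  have e: "cinner u (M *v w) = cnj (cinner w (M *v u))" using herm_cinner[OF assms] .
  have "cinner (u + complex_of_real t *s w) (M *v (u + complex_of_real t *s w))
     = cinner u (M *v u) + complex_of_real t * cinner u (M *v w) + complex_of_real t * cinner w (M *v u)
       + complex_of_real t * complex_of_real t * cinner w (M *v w)"
    by (simp add: matrix_vector_right_distrib mv_scale cinner_add_left cinner_add_right
          cinner_scale_left cinner_scale_right algebra_simps)
  then show ?thesis by (simp add: e power2_eq_square algebra_simps)
qed

lemma lin_quad_zero:
  fixes a b :: real
  assumes "\<And>t. 0 \<le> a * t + b * t^2"
  shows "a = 0"
proof (rule ccontr)
  assume a: "a \<noteq> 0"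
  have b: "b \<ge> 0" using assms[of 1] assms[of "-1"] by simp
  define t where "t = - a / (b + 1)"
  have tb: "t * (b+1) = -a" unfolding t_def using b by (simp add: field_simps)
  have "(b+1)^2 * (a*t + b*t^2) = a*(t*(b+1)) + a*b*(t*(b+1)) + b*(t*(b+1))^2"
    by (simp add: algebra_simps power2_eq_square)
  also have "\<dots> = - (a^2)" using tb by (simp add: algebra_simps power2_eq_square)
  finally have "(b+1)^2 * (a*t+b*t^2) < 0" using a by simp
  then have "a*t + b*t^2 < 0" using b by (simp add: mult_less_0_iff)
  then show False using assms[of t] by simp
qed

lemma psd_kernel:
  assumes "psd M" "Re (cinner v (M *v v)) = 0"
  shows "M *v v = 0"
proof -
  have h: "herm M" using psd_herm[OF assms(1)] .
  let ?w = "M *v v"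
  have "\<And>t. 0 \<le> (2 * Re (cinner ?w ?w)) * t + Re (cinner ?w (M *v ?w)) * t^2"
  proof -
    fix t
    have "0 \<le> Re (cinner (v + complex_of_real t *s ?w) (M *v (v + complex_of_real t *s ?w)))"
      using assms(1) psd_def by blast
    then show "0 \<le> (2 * Re (cinner ?w ?w)) * t + Re (cinner ?w (M *v ?w)) * t^2"
      using herm_quad[OF h, of v t ?w] assms(2) by (simp add: algebra_simps)
  qed
  then have "2 * Re (cinner ?w ?w) = 0" by (rule lin_quad_zero)
  then have "cinner ?w ?w = 0" by (simp add: cinner_self)
  then show ?thesis by (simp add: cinner_self_eq0)
qed

lemma cont_cinner[continuous_intros]:
  "continuous_on S (\<lambda>w::complex^'n::finite. cinner c w)"
  unfolding cinner_def by (intro continuous_intros)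

lemma cont_quad[continuous_intros]:
  "continuous_on S (\<lambda>w::complex^'n::finite. Re (cinner w (A *v w)))"
  unfolding cinner_def by (intro continuous_intros)

lemma herm_shift: "herm A \<Longrightarrow> herm (A - mat (complex_of_real m))"
  unfolding herm_def adj_def by (simp add: vec_eq_iff mat_def)

lemma mat_mv: "mat c *v x = c *s (x::complex^'n::finite)"
proof -
  have "(mat c *v x)$i = c * x$i" for i
  proof -
    have "(mat c *v x)$i = (\<Sum>j\<in>UNIV. (if i = j then c else 0) * x$j)"
      by (simp add: matrix_vector_mult_def mat_def)
    also have "\<dots> = (\<Sum>j\<in>UNIV. if j = i then c * x$i else 0)" by (rule sum.cong) auto
    also have "\<dots> = c * x$i" by simp
    finally show ?thesis .
  qed
  then show ?thesis by (simp add: vec_eq_iff)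
qed
lemma shift_mv: "(A - mat c) *v x = A *v x - c *s (x::complex^'n::finite)"
  by (simp add: matrix_vector_mult_diff_rdistrib mat_mv)

lemma variational:
  fixes A :: "'n::finite cmat" and v :: "nat \<Rightarrow> complex^'n"
  assumes h: "herm A"
    and eig: "\<And>i. i < k \<Longrightarrow> A *v v i = complex_of_real (\<mu> i) *s v i"
    and ne: "w0 \<in> {w. \<forall>i<k. cinner (v i) w = 0}" "w0 \<noteq> 0"
  shows "\<exists>u m. (\<forall>i<k. cinner (v i) u = 0) \<and> norm u = 1 \<and> A *v u = complex_of_real m *s u"
proof -
  define W where "W = {w. \<forall>i<k. cinner (v i) w = 0}"
  have Wadd: "x + y \<in> W" if "x \<in> W" "y \<in> W" for x y
    using that unfolding W_def by (simp add: cinner_add_right)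
  have Wscale: "c *s x \<in> W" if "x \<in> W" for x c
    using that unfolding W_def by (simp add: cinner_scale_right)
  have Wclosed: "closed W"
  proof -
    have "W = (\<Inter>i\<in>{..<k}. {w. cinner (v i) w = 0})" unfolding W_def by auto
    moreover have "closed {w. cinner (v i) w = 0}" for i
      by (rule closed_Collect_eq) (intro continuous_intros)+
    ultimately show ?thesis by auto
  qed
  define S where "S = W \<inter> sphere 0 1"
  have Scomp: "compact S" unfolding S_def using Wclosed by (intro closed_Int_compact) auto
  have normalize: "complex_of_real (1 / norm w) *s w \<in> S" if "w \<in> W" "w \<noteq> 0" for w
  proof -
    have "complex_of_real (1 / norm w) *s w = (1 / norm w) *\<^sub>R w" by (simp only: scaleR_vec_s)
    then have "norm (complex_of_real (1 / norm w) *s w) = 1"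
      using that by simp
    then show ?thesis using Wscale[OF that(1)] unfolding S_def by simp
  qed
  have Sne: "S \<noteq> {}" using normalize[of w0] ne unfolding W_def by blast
  define f where "f = (\<lambda>w. Re (cinner w (A *v w)))"
  obtain u where uS: "u \<in> S" and umin: "\<And>y. y \<in> S \<Longrightarrow> f u \<le> f y"
    using continuous_attains_inf[OF Scomp Sne, of f] unfolding f_def
    by (auto intro: continuous_intros)
  define m where "m = f u"
  have uW: "u \<in> W" and un: "norm u = 1" using uS unfolding S_def by auto
  have fscale: "f (complex_of_real c *s w) = c^2 * f w" for c w
    unfolding f_def by (simp add: mv_scale cinner_scale_left cinner_scale_right power2_eq_square mult.assoc)
  have fge: "m * (norm w)^2 \<le> f w" if "w \<in> W" for w
  proof (cases "w = 0")
    case True then show ?thesis unfolding f_def by simp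
  next
    case False
    have "m \<le> f (complex_of_real (1 / norm w) *s w)"
      unfolding m_def using umin normalize[OF that False] by blast
    also have "\<dots> = (1 / norm w)^2 * f w" by (rule fscale)
    also have "\<dots> = f w / (norm w)^2" by (simp add: power_divide)
    finally show ?thesis using False by (simp add: field_simps)
  qed
  define M where "M = A - mat (complex_of_real m)"
  have hM: "herm M" unfolding M_def by (rule herm_shift[OF h])
  have QM: "Re (cinner w (M *v w)) = f w - m * (norm w)^2" for w
    unfolding M_def f_def by (simp add: shift_mv cinner_diff_right cinner_scale_right cinner_self)
  have QMu: "Re (cinner u (M *v u)) = 0" using QM[of u] un unfolding m_def by simp
  have QMge: "Re (cinner w (M *v w)) \<ge> 0" if "w \<in> W" for w using QM[of w] fge[OF that] by simp
  have orth: "Re (cinner w (M *v u)) = 0" if "w \<in> W" for w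
  proof -
    have "0 \<le> (2 * Re (cinner w (M *v u))) * t + Re (cinner w (M *v w)) * t^2" for t
    proof -
      have "u + complex_of_real t *s w \<in> W" using Wadd[OF uW Wscale[OF that]] .
      then have "0 \<le> Re (cinner (u + complex_of_real t *s w) (M *v (u + complex_of_real t *s w)))"
        by (rule QMge)
      then show ?thesis using herm_quad[OF hM, of u t w] QMu by (simp add: algebra_simps)
    qed
    then have "2 * Re (cinner w (M *v u)) = 0" by (rule lin_quad_zero)
    then show ?thesis by simp
  qed
  have AuW: "A *v u \<in> W"
    unfolding W_def
  proof (intro CollectI allI impI)
    fix i assume i: "i < k"
    have "cinner (v i) (A *v u) = cinner (A *v v i) u"
      using adj_mv[of "v i" A u] h unfolding herm_def by simp
    also have "\<dots> = 0" using eig[OF i] uW i unfolding W_def by (simp add: cinner_scale_left)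
    finally show "cinner (v i) (A *v u) = 0" .
  qed
  have MuW: "M *v u \<in> W"
    unfolding M_def shift_mv using Wadd[OF AuW Wscale[OF uW, of "- complex_of_real m"]]
    by (simp add: vec_eq_iff)
  have "Re (cinner (M *v u) (M *v u)) = 0" using orth[OF MuW] .
  then have "cinner (M *v u) (M *v u) = 0" by (simp add: cinner_self)
  then have "M *v u = 0" by (simp add: cinner_self_eq0)
  then have "A *v u = complex_of_real m *s u" unfolding M_def shift_mv by simp
  then show ?thesis using uW un unfolding W_def by blast
qed


definition orthon :: "nat \<Rightarrow> (nat \<Rightarrow> complex^'n::finite) \<Rightarrow> bool" where
  "orthon k v \<longleftrightarrow> (\<forall>i<k. \<forall>j<k. cinner (v i) (v j) = (if i = j then 1 else 0))"
definition onb :: "nat \<Rightarrow> (nat \<Rightarrow> complex^'n::finite) \<Rightarrow> bool" where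
  "onb k v \<longleftrightarrow> orthon k v \<and> (\<forall>x. x = (\<Sum>i<k. cinner (v i) x *s v i))"
definition Op :: "nat \<Rightarrow> (nat \<Rightarrow> complex^'n::finite) \<Rightarrow> (nat \<Rightarrow> real) \<Rightarrow> 'n cmat" where
  "Op k v \<mu> = (\<Sum>i<k. \<mu> i *\<^sub>R proj (v i))"

lemma proj_mv: "proj \<phi> *v x = cinner \<phi> x *s \<phi>"
  by (simp add: proj_def matrix_vector_mult_def cinner_def vec_eq_iff sum_distrib_left mult_ac)

lemma Op_mv: "Op k v \<mu> *v x = (\<Sum>i<k. (complex_of_real (\<mu> i) * cinner (v i) x) *s v i)"
  by (simp add: Op_def sum_mv scaleR_mv proj_mv vector_smult_assoc)

lemma orth_coeff:
  assumes "orthon k v" "j < k"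
  shows "cinner (v j) (\<Sum>i<k. a i *s v i) = a j"
proof -
  have "cinner (v j) (\<Sum>i<k. a i *s v i) = (\<Sum>i<k. a i * cinner (v j) (v i))"
    by (simp add: cinner_sum_right cinner_scale_right)
  also have "\<dots> = (\<Sum>i<k. if i = j then a j else 0)"
    using assms unfolding orthon_def by (intro sum.cong) auto
  also have "\<dots> = a j" using assms(2) by simp
  finally show ?thesis .
qed

lemma Op_coeff: "orthon k v \<Longrightarrow> j < k \<Longrightarrow> cinner (v j) (Op k v \<mu> *v x) = complex_of_real (\<mu> j) * cinner (v j) x"
  unfolding Op_mv by (rule orth_coeff)

lemma Op_eig:
  assumes "orthon k v" "j < k"
  shows "Op k v \<mu> *v v j = complex_of_real (\<mu> j) *s v j"
proof -
  have "Op k v \<mu> *v v j = (\<Sum>i<k. (if i = j then complex_of_real (\<mu> j) *s v j else 0))"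
    unfolding Op_mv using assms unfolding orthon_def by (intro sum.cong) auto
  also have "\<dots> = complex_of_real (\<mu> j) *s v j" using assms(2) by simp
  finally show ?thesis .
qed

lemma Op_one: "onb k v \<Longrightarrow> Op k v (\<lambda>_. 1) *v x = x"
  unfolding Op_mv onb_def by simp

lemma Op_mult:
  assumes "orthon k v"
  shows "Op k v \<mu> ** Op k v \<nu> = Op k v (\<lambda>i. \<mu> i * \<nu> i)"
proof (subst matrix_eq, intro allI)
  fix x
  have "(Op k v \<mu> ** Op k v \<nu>) *v x = Op k v \<mu> *v (Op k v \<nu> *v x)"
    by (simp add: matrix_vector_mul_assoc)
  also have "\<dots> = (\<Sum>i<k. (complex_of_real (\<mu> i) * (complex_of_real (\<nu> i) * cinner (v i) x)) *s v i)"
    unfolding Op_mv[of k v \<mu>] using Op_coeff[OF assms] by (intro sum.cong) auto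
  also have "\<dots> = Op k v (\<lambda>i. \<mu> i * \<nu> i) *v x"
    unfolding Op_mv by (simp add: mult.assoc)
  finally show "(Op k v \<mu> ** Op k v \<nu>) *v x = Op k v (\<lambda>i. \<mu> i * \<nu> i) *v x" .
qed

lemma Op_quad: "cinner x (Op k v \<mu> *v x) = (\<Sum>i<k. complex_of_real (\<mu> i * (cmod (cinner (v i) x))^2))"
proof -
  have "cinner x (Op k v \<mu> *v x) = (\<Sum>i<k. complex_of_real (\<mu> i) * (cinner (v i) x * cnj (cinner (v i) x)))"
    unfolding Op_mv by (simp add: cinner_sum_right cinner_scale_right mult.assoc cinner_commute[of x])
  also have "\<dots> = (\<Sum>i<k. complex_of_real (\<mu> i * (cmod (cinner (v i) x))^2))"
    by (simp add: complex_norm_square[symmetric])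
  finally show ?thesis .
qed

lemma onb_parseval: "onb k v \<Longrightarrow> (norm x)^2 = (\<Sum>i<k. (cmod (cinner (v i) x))^2)"
proof -
  assume o: "onb k v"
  have "complex_of_real ((norm x)^2) = cinner x (Op k v (\<lambda>_. 1) *v x)"
    by (simp add: Op_one[OF o] cinner_self)
  also have "\<dots> = complex_of_real (\<Sum>i<k. (cmod (cinner (v i) x))^2)"
    by (simp add: Op_quad)
  finally show ?thesis by (simp only: of_real_eq_iff)
qed

lemma trace_proj: "trace (proj \<phi>) = cinner \<phi> \<phi>"
  by (simp add: trace_def proj_def cinner_def mult.commute)
lemma trace_zero: "trace (0::'n::finite cmat) = 0" by (simp add: trace_def)
lemma trace_sum: "trace (\<Sum>i\<in>I. (f i :: 'n::finite cmat)) = (\<Sum>i\<in>I. trace (f i))"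
  by (induction I rule: infinite_finite_induct) (simp_all add: trace_add trace_zero)
lemma trace_scaleR: "trace (c *\<^sub>R (A :: 'n::finite cmat)) = complex_of_real c * trace A"
  by (simp add: trace_def sum_distrib_left) (simp add: scaleR_conv_of_real)

lemma Op_trace: "orthon k v \<Longrightarrow> trace (Op k v \<mu>) = complex_of_real (\<Sum>i<k. \<mu> i)"
  unfolding Op_def orthon_def by (simp add: trace_sum trace_scaleR trace_proj)

lemma Op_psd: "(\<And>i. i < k \<Longrightarrow> \<mu> i \<ge> 0) \<Longrightarrow> psd (Op k v \<mu>)"
  unfolding psd_def Op_quad by (auto simp: Re_sum Im_sum intro!: sum_nonneg)

lemma orthon_bound:
  assumes "orthon k (v :: nat \<Rightarrow> complex^'n::finite)"
  shows "k \<le> DIM(complex^'n)"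
proof -
  have vv: "cinner (v i) (v i) = 1" if "i < k" for i using assms that unfolding orthon_def by auto
  have inj: "inj_on v {..<k}"
  proof
    fix i j assume "i \<in> {..<k}" "j \<in> {..<k}" "v i = v j"
    then show "i = j" using assms vv unfolding orthon_def by (metis lessThan_iff zero_neq_one)
  qed
  have "pairwise orthogonal (v ` {..<k})"
    unfolding pairwise_def orthogonal_def
    using assms unfolding orthon_def by (auto simp: Re_cinner[symmetric])
  moreover have "0 \<notin> v ` {..<k}"
  proof
    assume "0 \<in> v ` {..<k}"
    then obtain i where "i < k" "v i = 0" by auto
    then show False using vv[of i] by simp
  qed
  ultimately have "independent (v ` {..<k})" by (rule pairwise_orthogonal_independent)
  then have "card (v ` {..<k}) \<le> DIM(complex^'n)" using independent_bound by blast
  then show ?thesis using card_image[OF inj] by simp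
qed

theorem spectral:
  fixes A :: "'n::finite cmat"
  assumes h: "herm A"
  shows "\<exists>k v \<mu>. onb k v \<and> A = Op k v \<mu>"
proof -
  define good where "good k \<longleftrightarrow> (\<exists>v \<mu>. orthon k v \<and> (\<forall>i<k. A *v v i = complex_of_real (\<mu> i) *s v i))" for k
  have g0: "good 0" unfolding good_def orthon_def by auto
  have gb: "\<forall>k. good k \<longrightarrow> k \<le> DIM(complex^'n)" unfolding good_def using orthon_bound by blast
  obtain k where gk: "good k" and kmax: "\<And>y. good y \<Longrightarrow> y \<le> k"
    using Nat.ex_has_greatest_nat[OF g0 gb] by blast
  obtain v \<mu> where ov: "orthon k v" and ev: "\<And>i. i < k \<Longrightarrow> A *v v i = complex_of_real (\<mu> i) *s v i"
    using gk unfolding good_def by blast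
  have W0: "w = 0" if w: "\<forall>i<k. cinner (v i) w = 0" for w
  proof (rule ccontr)
    assume wn: "w \<noteq> 0"
    have wW: "w \<in> {w. \<forall>i<k. cinner (v i) w = 0}" using w by simp
    obtain u m where uW: "\<forall>i<k. cinner (v i) u = 0" and un: "norm u = 1"
        and ue: "A *v u = complex_of_real m *s u"
      using variational[OF h ev wW wn] by blast
    define v' where "v' = v(k := u)"
    define \<mu>' where "\<mu>' = \<mu>(k := m)"
    have "orthon (Suc k) v'"
      unfolding orthon_def
    proof (intro allI impI)
      fix i j assume i: "i < Suc k" and j: "j < Suc k"
      show "cinner (v' i) (v' j) = (if i = j then 1 else 0)"
      proof (cases "i = k"; cases "j = k")
        assume "i = k" "j = k" then show ?thesis unfolding v'_def using un by (simp add: cinner_self)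
      next
        assume "i = k" "j \<noteq> k" then show ?thesis unfolding v'_def using uW j
          by (simp add: cinner_commute[of u])
      next
        assume "i \<noteq> k" "j = k" then show ?thesis unfolding v'_def using uW i by simp
      next
        assume "i \<noteq> k" "j \<noteq> k" then show ?thesis unfolding v'_def using ov i j unfolding orthon_def by simp
      qed
    qed
    moreover have "\<forall>i<Suc k. A *v v' i = complex_of_real (\<mu>' i) *s v' i"
      unfolding v'_def \<mu>'_def using ev ue by (auto simp: less_Suc_eq)
    ultimately have "good (Suc k)" unfolding good_def by blast
    then show False using kmax by fastforce
  qed
  have exp: "x = (\<Sum>i<k. cinner (v i) x *s v i)" for x
  proof -
    let ?y = "x - (\<Sum>i<k. cinner (v i) x *s v i)"
    have "\<forall>i<k. cinner (v i) ?y = 0"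
      using orth_coeff[OF ov] by (simp add: cinner_diff_right)
    then have "?y = 0" by (rule W0)
    then show ?thesis by simp
  qed
  have onb: "onb k v" unfolding onb_def using ov exp by blast
  have "A = Op k v \<mu>"
  proof (subst matrix_eq, intro allI)
    fix x
    have "A *v x = A *v (\<Sum>i<k. cinner (v i) x *s v i)" using exp[of x] by simp
    also have "\<dots> = (\<Sum>i<k. cinner (v i) x *s (complex_of_real (\<mu> i) *s v i))"
      by (simp add: mv_sum mv_scale ev)
    also have "\<dots> = Op k v \<mu> *v x" unfolding Op_mv by (simp add: vector_smult_assoc mult.commute)
    finally show "A *v x = Op k v \<mu> *v x" .
  qed
  then show ?thesis using onb by blast
qed


lemma Op_cong: "(\<And>i. i < k \<Longrightarrow> \<mu> i = \<nu> i) \<Longrightarrow> Op k v \<mu> = Op k v \<nu>"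
  unfolding Op_def by (intro sum.cong) auto

lemma Op_zero: "(\<And>i. i < k \<Longrightarrow> \<mu> i = 0) \<Longrightarrow> Op k v \<mu> = 0"
  unfolding Op_def by simp

lemma psd_eig_nonneg:
  assumes "psd A" "A = Op k v \<mu>" "orthon k v" "i < k"
  shows "\<mu> i \<ge> 0"
proof -
  have "cinner (v i) (A *v v i) = complex_of_real (\<mu> i)"
    using assms Op_eig[OF assms(3,4)] unfolding orthon_def by (simp add: cinner_scale_right)
  then show ?thesis using assms(1) unfolding psd_def by (metis Re_complex_of_real)
qed

lemma herm_diff: "herm C \<Longrightarrow> herm D \<Longrightarrow> herm (C - D)"
  unfolding herm_def adj_def by (simp add: vec_eq_iff)

lemma sqrt_exists:
  assumes "psd A"
  shows "\<exists>B. psd B \<and> B ** B = A"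
proof -
  obtain k v \<mu> where o: "onb k v" and A: "A = Op k v \<mu>" using spectral[OF psd_herm[OF assms]] by blast
  have ov: "orthon k v" using o unfolding onb_def by simp
  have nn: "\<And>i. i < k \<Longrightarrow> \<mu> i \<ge> 0" using psd_eig_nonneg[OF assms A ov] .
  define B where "B = Op k v (\<lambda>i. sqrt (\<mu> i))"
  have "psd B" unfolding B_def by (rule Op_psd) (simp add: nn)
  moreover have "B ** B = A"
    unfolding B_def Op_mult[OF ov] A using nn by (intro Op_cong) (simp add: real_sqrt_mult[symmetric])
  ultimately show ?thesis by blast
qed

lemma sqrt_unique:
  assumes C: "psd C" and D: "psd D" and eq: "C ** C = D ** D"
  shows "C = D"
proof -
  define X where "X = C - D"
  have hX: "herm X" unfolding X_def using herm_diff psd_herm C D by blast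
  obtain k v \<mu> where o: "onb k v" and XO: "X = Op k v \<mu>" using spectral[OF hX] by blast
  have ov: "orthon k v" using o unfolding onb_def by simp
  have "\<mu> i = 0" if i: "i < k" for i
  proof (rule ccontr)
    assume mu: "\<mu> i \<noteq> 0"
    let ?u = "v i"
    have uu: "cinner ?u ?u = 1" using ov i unfolding orthon_def by simp
    have Xu: "X *v ?u = complex_of_real (\<mu> i) *s ?u" using XO Op_eig[OF ov i] by simp
    have key: "C *v (X *v ?u) + X *v (D *v ?u) = 0"
    proof -
      have "C *v (X *v ?u) + X *v (D *v ?u) = (C ** C) *v ?u - (D ** D) *v ?u"
        unfolding X_def by (simp add: matrix_vector_mult_diff_rdistrib matrix_vector_mult_diff_distrib
            matrix_vector_mul_assoc[symmetric])
      then show ?thesis using eq by simp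
    qed
    have t1: "cinner ?u (C *v (X *v ?u)) = complex_of_real (\<mu> i) * cinner ?u (C *v ?u)"
      by (simp add: Xu mv_scale cinner_scale_right)
    have t2: "cinner ?u (X *v (D *v ?u)) = complex_of_real (\<mu> i) * cinner ?u (D *v ?u)"
    proof -
      have "cinner ?u (X *v (D *v ?u)) = cinner (X *v ?u) (D *v ?u)"
        using adj_mv[of ?u X "D *v ?u"] hX unfolding herm_def by simp
      then show ?thesis by (simp add: Xu cinner_scale_left)
    qed
    have "complex_of_real (\<mu> i) * (cinner ?u (C *v ?u) + cinner ?u (D *v ?u)) = 0"
      using arg_cong[OF key, of "cinner ?u"] t1 t2 by (simp add: cinner_add_right distrib_left)
    then have s0: "cinner ?u (C *v ?u) + cinner ?u (D *v ?u) = 0" using mu by simp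
    have c0: "Re (cinner ?u (C *v ?u)) \<ge> 0" "Re (cinner ?u (D *v ?u)) \<ge> 0"
      using C D unfolding psd_def by auto
    have "Re (cinner ?u (C *v ?u)) = 0" "Re (cinner ?u (D *v ?u)) = 0"
      using c0 arg_cong[OF s0, of Re] by auto
    then have "C *v ?u = 0" "D *v ?u = 0" using psd_kernel C D by auto
    then have "X *v ?u = 0" unfolding X_def by (simp add: matrix_vector_mult_diff_rdistrib)
    then have "cinner ?u (X *v ?u) = 0" by simp
    then show False using Xu uu mu by (simp add: cinner_scale_right)
  qed
  then have "X = 0" using XO Op_zero by blast
  then show ?thesis unfolding X_def by simp
qed

lemma msqrt_eq: "psd A \<Longrightarrow> psd B \<Longrightarrow> B ** B = A \<Longrightarrow> msqrt A = B"
  unfolding msqrt_def by (rule the_equality) (auto intro: sqrt_unique)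

lemma msqrt_props: assumes "psd A" shows "psd (msqrt A)" "msqrt A ** msqrt A = A"
proof -
  obtain B where "psd B" "B ** B = A" using sqrt_exists[OF assms] by blast
  then have "msqrt A = B" using msqrt_eq assms by blast
  then show "psd (msqrt A)" "msqrt A ** msqrt A = A" using \<open>psd B\<close> \<open>B ** B = A\<close> by auto
qed

lemma quad_le_trace:
  assumes "psd X"
  shows "Re (cinner x (X *v x)) \<le> Re (trace X) * (norm x)^2"
proof -
  obtain k v \<mu> where o: "onb k v" and XO: "X = Op k v \<mu>" using spectral[OF psd_herm[OF assms]] by blast
  have ov: "orthon k v" using o unfolding onb_def by simp
  have nn: "\<And>i. i < k \<Longrightarrow> \<mu> i \<ge> 0" using psd_eig_nonneg[OF assms XO ov] .
  have ci: "(cmod (cinner (v i) x))^2 \<le> (norm x)^2" if "i < k" for i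
    unfolding onb_parseval[OF o, of x] using that by (intro member_le_sum) auto
  have "Re (cinner x (X *v x)) = (\<Sum>i<k. \<mu> i * (cmod (cinner (v i) x))^2)"
    unfolding XO Op_quad by (simp add: Re_sum)
  also have "\<dots> \<le> (\<Sum>i<k. \<mu> i * (norm x)^2)"
    using nn ci by (intro sum_mono mult_left_mono) auto
  also have "\<dots> = Re (trace X) * (norm x)^2"
    unfolding XO Op_trace[OF ov] by (simp add: sum_distrib_right)
  finally show ?thesis .
qed

lemma trace_psd: assumes "psd X" shows "Im (trace X) = 0" "Re (trace X) \<ge> 0"
proof -
  obtain k v \<mu> where o: "onb k v" and XO: "X = Op k v \<mu>" using spectral[OF psd_herm[OF assms]] by blast
  have ov: "orthon k v" using o unfolding onb_def by simp
  have nn: "\<And>i. i < k \<Longrightarrow> \<mu> i \<ge> 0" using psd_eig_nonneg[OF assms XO ov] .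
  show "Im (trace X) = 0" "Re (trace X) \<ge> 0" unfolding XO Op_trace[OF ov] using nn by (auto intro: sum_nonneg)
qed

lemma lambda_min_le:
  assumes "psd A"
  shows "lambda_min A * (norm x)^2 \<le> Re (cinner x (A *v x))"
proof -
  obtain k v \<mu> where o: "onb k v" and XO: "A = Op k v \<mu>" using spectral[OF psd_herm[OF assms]] by blast
  have ov: "orthon k v" using o unfolding onb_def by simp
  define E where "E = {x::real. \<exists>v. v \<noteq> 0 \<and> A *v v = complex_of_real x *s v}"
  have bdd: "bdd_below E"
  proof (rule bdd_belowI)
    fix y assume "y \<in> E"
    then obtain w where w: "w \<noteq> 0" "A *v w = complex_of_real y *s w" unfolding E_def by blast
    have "Re (cinner w (A *v w)) = y * (norm w)^2" using w by (simp add: cinner_scale_right cinner_self)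
    moreover have "Re (cinner w (A *v w)) \<ge> 0" using assms psd_def by blast
    moreover have "(norm w)^2 > 0" using w by simp
    ultimately show "0 \<le> y" by (metis zero_le_mult_iff not_less)
  qed
  have le: "lambda_min A \<le> \<mu> i" if i: "i < k" for i
  proof -
    have "v i \<noteq> 0" using ov i unfolding orthon_def by (metis cinner_zero_left zero_neq_one)
    then have "\<mu> i \<in> E" unfolding E_def using Op_eig[OF ov i] XO by blast
    then show ?thesis unfolding lambda_min_def E_def[symmetric] using bdd by (rule cInf_lower)
  qed
  have "lambda_min A * (norm x)^2 = (\<Sum>i<k. lambda_min A * (cmod (cinner (v i) x))^2)"
    unfolding onb_parseval[OF o, of x] by (simp add: sum_distrib_left)
  also have "\<dots> \<le> (\<Sum>i<k. \<mu> i * (cmod (cinner (v i) x))^2)"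
    using le by (intro sum_mono mult_right_mono) auto
  also have "\<dots> = Re (cinner x (A *v x))"
    unfolding XO Op_quad by (simp add: Re_sum)
  finally show ?thesis .
qed


lemma adj_mult: "adj ((A::'n::finite cmat) ** B) = adj B ** adj A"
  by (simp add: adj_def matrix_matrix_mult_def vec_eq_iff cnj_sum mult.commute)

lemma psd_scaleR: "c \<ge> 0 \<Longrightarrow> psd A \<Longrightarrow> psd (c *\<^sub>R A)"
  unfolding psd_def by (simp add: scaleR_mv cinner_scale_right)

lemma scaleR_mult_mult: "(a *\<^sub>R (A::'n::finite cmat)) ** (b *\<^sub>R (B::'n cmat)) = (a * b) *\<^sub>R (A ** B)"
proof (subst matrix_eq, intro allI)
  fix x
  have "((a *\<^sub>R A) ** (b *\<^sub>R B)) *v x = (a *\<^sub>R A) *v ((b *\<^sub>R B) *v x)"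
    by (simp add: matrix_vector_mul_assoc)
  also have "\<dots> = complex_of_real a *s (A *v (complex_of_real b *s (B *v x)))"
    by (simp only: scaleR_mv)
  also have "\<dots> = complex_of_real (a * b) *s ((A ** B) *v x)"
    by (simp add: mv_scale vector_smult_assoc matrix_vector_mul_assoc)
  also have "\<dots> = ((a * b) *\<^sub>R (A ** B)) *v x"
    by (simp only: scaleR_mv)
  finally show "((a *\<^sub>R A) ** (b *\<^sub>R B)) *v x = ((a * b) *\<^sub>R (A ** B)) *v x" .
qed

lemma proj_psd: "psd (proj \<phi>)"
proof -
  have "cinner x (proj \<phi> *v x) = complex_of_real ((cmod (cinner \<phi> x))^2)" for x
    by (simp add: proj_mv cinner_scale_right cinner_commute[of x \<phi>] complex_norm_square del: of_real_power)
  then show ?thesis unfolding psd_def by simp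
qed

lemma pure_cinner: "pure_state \<phi> \<Longrightarrow> cinner \<phi> \<phi> = 1"
  unfolding pure_state_def by (simp add: cinner_self)

lemma proj_idem: "pure_state \<phi> \<Longrightarrow> proj \<phi> ** proj \<phi> = proj \<phi>"
  by (simp add: matrix_eq matrix_vector_mul_assoc[symmetric] proj_mv mv_scale cinner_scale_right
      pure_cinner vector_smult_assoc)

lemma psd_quad_real: "psd A \<Longrightarrow> cinner x (A *v x) = complex_of_real (Re (cinner x (A *v x)))"
  unfolding psd_def by (simp add: complex_eq_iff)

lemma fidelity_pure:
  assumes tau: "density \<tau>" and phi: "pure_state \<phi>"
  shows "fidelity \<tau> (proj \<phi>) = expval \<phi> \<tau>"
proof -
  let ?P = "proj \<phi>"
  have pt: "psd \<tau>" using tau density_def by blast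
  have mP: "msqrt ?P = ?P" using msqrt_eq[OF proj_psd proj_psd proj_idem[OF phi]] .
  define S where "S = msqrt \<tau>"
  have pS: "psd S" and SS: "S ** S = \<tau>" using msqrt_props[OF pt] unfolding S_def by auto
  have aS: "adj S = S" using psd_herm[OF pS] herm_def by blast
  have aP: "adj ?P = ?P" using psd_herm[OF proj_psd] herm_def by blast
  define r where "r = expval \<phi> \<tau>"
  have r0: "r \<ge> 0" unfolding r_def expval_def using pt psd_def by blast
  have cr: "cinner \<phi> (\<tau> *v \<phi>) = complex_of_real r" unfolding r_def expval_def by (rule psd_quad_real[OF pt])
  have XX: "adj (S ** ?P) ** (S ** ?P) = r *\<^sub>R ?P"
  proof (subst matrix_eq, intro allI)
    fix x
    have "(adj (S ** ?P) ** (S ** ?P)) *v x = ?P *v (\<tau> *v (?P *v x))"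
      unfolding adj_mult aS aP SS[symmetric] by (simp add: matrix_vector_mul_assoc[symmetric])
    also have "\<dots> = (r *\<^sub>R ?P) *v x"
      by (simp add: proj_mv mv_scale cinner_scale_right cr scaleR_mv vector_smult_assoc mult.commute)
    finally show "(adj (S ** ?P) ** (S ** ?P)) *v x = (r *\<^sub>R ?P) *v x" .
  qed
  have ps: "psd (sqrt r *\<^sub>R ?P)" by (rule psd_scaleR) (simp_all add: r0 proj_psd)
  have sq: "(sqrt r *\<^sub>R ?P) ** (sqrt r *\<^sub>R ?P) = r *\<^sub>R ?P"
    by (simp add: scaleR_mult_mult proj_idem[OF phi] r0)
  have msq: "msqrt (r *\<^sub>R ?P) = sqrt r *\<^sub>R ?P"
    by (rule msqrt_eq[OF psd_scaleR[OF r0 proj_psd] ps sq])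
  have "trace_norm (msqrt \<tau> ** msqrt ?P) = sqrt r"
    unfolding trace_norm_def mP S_def[symmetric] XX msq
    by (simp add: trace_scaleR trace_proj pure_cinner[OF phi])
  then show ?thesis unfolding fidelity_def r_def using r0 r_def by simp
qed


lemma scaleR_cscale: "r *\<^sub>R (A::'n::finite cmat) = cscale (complex_of_real r) A"
  by (simp add: cscale_def vec_eq_iff) (simp add: scaleR_conv_of_real)

lemma CP_add: "completely_positive E \<Longrightarrow> E (A + B) = E A + E B"
  unfolding completely_positive_def clinear_map_def by blast
lemma CP_diff: "completely_positive E \<Longrightarrow> E (A - B) = E A - E B"
proof -
  assume cp: "completely_positive E"
  have "E A = E ((A - B) + B)" by simp
  also have "\<dots> = E (A - B) + E B" by (rule CP_add[OF cp])
  finally show ?thesis by simp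
qed
lemma CP_scaleR: "completely_positive E \<Longrightarrow> E (r *\<^sub>R A) = r *\<^sub>R E A"
  unfolding completely_positive_def clinear_map_def scaleR_cscale by blast
lemma CP_psd:
  assumes cp: "completely_positive E" and A: "psd A"
  shows "psd (E A)"
proof -
  have one: "{..<1::nat} = {0}" by auto
  have "block_psd 1 (\<lambda>i j. A)" unfolding block_psd_def one using A unfolding psd_def by simp
  then have b: "block_psd 1 (\<lambda>i j. E A)" using cp completely_positive_def by blast
  show ?thesis unfolding psd_def
  proof
    fix x
    show "Im (cinner x (E A *v x)) = 0 \<and> 0 \<le> Re (cinner x (E A *v x))"
      using b unfolding block_psd_def one by (auto dest: spec[of _ "\<lambda>_. x"])
  qed
qed
lemma CP_loewner:
  assumes cp: "completely_positive E" and "loewner_le A B"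
  shows "loewner_le (E A) (E B)"
  using assms CP_psd[OF cp, of "B - A"] unfolding loewner_le_def CP_diff[OF cp] by simp

lemma expval_diff: "expval \<phi> (A - B) = expval \<phi> A - expval \<phi> B"
  unfolding expval_def by (simp add: matrix_vector_mult_diff_rdistrib cinner_diff_right)
lemma expval_scaleR: "expval \<phi> (c *\<^sub>R A) = c * expval \<phi> A"
  unfolding expval_def by (simp add: scaleR_mv cinner_scale_right)
lemma cont_expval: "continuous_on S (\<lambda>X. expval \<phi> X)"
  unfolding expval_def cinner_def matrix_vector_mult_def by (intro continuous_intros)

lemma loewner_trace: "loewner_le A B \<Longrightarrow> Re (trace A) \<le> Re (trace B)"
  unfolding loewner_le_def using trace_psd(2)[of "B - A"] by (simp add: trace_sub)

definition Qf :: "complex^'n::finite \<Rightarrow> 'n cmat \<Rightarrow> real" where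
  "Qf \<phi> X = Re (trace X) - expval \<phi> X"

lemma Qf_nonneg: "pure_state \<phi> \<Longrightarrow> psd X \<Longrightarrow> Qf \<phi> X \<ge> 0"
  unfolding Qf_def expval_def pure_state_def using quad_le_trace[of X \<phi>] by simp

lemma Qf_diff: "Qf \<phi> (A - B) = Qf \<phi> A - Qf \<phi> B"
  unfolding Qf_def by (simp add: expval_diff trace_sub)
lemma Qf_scaleR: "Qf \<phi> (c *\<^sub>R A) = c * Qf \<phi> A"
  unfolding Qf_def by (simp add: expval_scaleR trace_scaleR algebra_simps)

lemma Qf_mono: "pure_state \<phi> \<Longrightarrow> loewner_le A B \<Longrightarrow> Qf \<phi> A \<le> Qf \<phi> B"
  unfolding loewner_le_def using Qf_nonneg[of \<phi> "B - A"] by (simp add: Qf_diff)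

lemma density_trace: "density X \<Longrightarrow> Re (trace X) = 1"
  unfolding density_def by simp

lemma expval_le1: "pure_state \<phi> \<Longrightarrow> density X \<Longrightarrow> expval \<phi> X \<le> 1"
  using Qf_nonneg[of \<phi> X] density_trace[of X] unfolding Qf_def density_def by simp

lemma Rset_ge1:
  assumes "density X" "density Y" "loewner_le X (l *\<^sub>R Y)"
  shows "l \<ge> 1"
  using loewner_trace[OF assms(3)] density_trace[OF assms(1)] density_trace[OF assms(2)]
  by (simp add: trace_scaleR)

lemma Rmax_ge1: "density X \<Longrightarrow> density Y \<Longrightarrow> Rmax X Y \<ge> 1"
  unfolding Rmax_def by (rule Inf_greatest) (auto dest: Rset_ge1)

lemma Rmax_le: "loewner_le X (l *\<^sub>R Y) \<Longrightarrow> Rmax X Y \<le> ereal l"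
  unfolding Rmax_def by (rule Inf_lower) auto

lemma loewner_iff:
  "loewner_le X (l *\<^sub>R Y) \<longleftrightarrow> (\<forall>v. l * Im (cinner v (Y *v v)) - Im (cinner v (X *v v)) = 0
      \<and> 0 \<le> l * Re (cinner v (Y *v v)) - Re (cinner v (X *v v)))"
  unfolding loewner_le_def psd_def
  by (simp add: matrix_vector_mult_diff_rdistrib cinner_diff_right scaleR_mv cinner_scale_right)

lemma Rset_closed: "closed {l. loewner_le X (l *\<^sub>R Y)}"
  unfolding loewner_iff
  by (intro closed_Collect_all closed_Collect_conj closed_Collect_eq closed_Collect_le continuous_intros)

lemma Rmax_finite:
  assumes X: "density X" and Y: "density Y" and fin: "Rmax X Y \<noteq> \<infinity>"
  shows "\<exists>a. Rmax X Y = ereal a \<and> loewner_le X (a *\<^sub>R Y)"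
proof -
  define S where "S = {l. loewner_le X (l *\<^sub>R Y)}"
  have ne: "S \<noteq> {}" using fin unfolding Rmax_def S_def[symmetric] by (auto simp: top_ereal_def)
  have bdd: "bdd_below S" unfolding S_def using Rset_ge1[OF X Y] by (intro bdd_belowI) auto
  have "Inf S \<in> S" using closed_contains_Inf[OF ne bdd] Rset_closed unfolding S_def by blast
  moreover have "Rmax X Y = ereal (Inf S)" unfolding Rmax_def S_def[symmetric] using ereal_Inf'[OF bdd ne]
    by (simp add: image_def)
  ultimately show ?thesis unfolding S_def by blast
qed


lemma FF_upper:
  assumes "free_set Fout" "pure_state \<phi>" "\<sigma> \<in> Fout"
  shows "expval \<phi> \<sigma> \<le> FF Fout \<phi>"
  unfolding FF_def
proof (rule cSUP_upper[OF assms(3)])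
  show "bdd_above ((\<lambda>\<sigma>. expval \<phi> \<sigma>) ` Fout)"
    using assms(1,2) expval_le1 unfolding free_set_def by (intro bdd_aboveI[of _ 1]) auto
qed

lemma FF_le1:
  assumes "free_set Fout" "pure_state \<phi>"
  shows "FF Fout \<phi> \<le> 1"
  unfolding FF_def using assms expval_le1 unfolding free_set_def by (intro cSUP_least) auto

lemma step_E:
  assumes Fout: "free_set Fout" and Fin: "free_set Fin" and rho: "density \<rho>" and phi: "pure_state \<phi>"
    and sig: "\<sigma> \<in> Fin" and ra: "loewner_le \<rho> (a *\<^sub>R \<sigma>)" and sb: "loewner_le \<sigma> (b *\<^sub>R \<rho>)"
    and E: "E \<in> RNG_ops Fin Fout" and t: "Re (trace (E \<rho>)) > 0"
  shows "1 - FF Fout \<phi> \<le> a * b * (1 - expval \<phi> ((1 / Re (trace (E \<rho>))) *\<^sub>R E \<rho>))"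
proof -
  define t where "t = Re (trace (E \<rho>))"
  define G where "G = 1 - FF Fout \<phi>"
  have cp: "completely_positive E" using E RNG_ops_def by blast
  obtain \<sigma>' p where s': "\<sigma>' \<in> Fout" and p: "0 \<le> p" "p \<le> 1" and Es: "E \<sigma> = p *\<^sub>R \<sigma>'"
    using E sig unfolding RNG_ops_def by blast
  have ds: "density \<sigma>" using Fin sig free_set_def by blast
  have ds': "density \<sigma>'" using Fout s' free_set_def by blast
  have a1: "a \<ge> 1" by (rule Rset_ge1[OF rho ds ra])
  have G0: "G \<ge> 0" unfolding G_def using FF_le1[OF Fout phi] by simp
  have Gs: "G \<le> 1 - expval \<phi> \<sigma>'" unfolding G_def using FF_upper[OF Fout phi s'] by simp
  have h1: "loewner_le (E \<rho>) ((a * p) *\<^sub>R \<sigma>')"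
    using CP_loewner[OF cp ra] unfolding CP_scaleR[OF cp] Es by simp
  have tap: "t \<le> a * p"
    using loewner_trace[OF h1] density_trace[OF ds'] unfolding t_def by (simp add: trace_scaleR)
  have h2: "loewner_le (E \<sigma>) (b *\<^sub>R E \<rho>)"
    using CP_loewner[OF cp sb] unfolding CP_scaleR[OF cp] .
  have "p * (1 - expval \<phi> \<sigma>') = Qf \<phi> (E \<sigma>)"
    using density_trace[OF ds'] unfolding Es Qf_def by (simp add: expval_scaleR trace_scaleR algebra_simps)
  also have "\<dots> \<le> b * Qf \<phi> (E \<rho>)" using Qf_mono[OF phi h2] by (simp add: Qf_scaleR)
  finally have pq: "p * (1 - expval \<phi> \<sigma>') \<le> b * Qf \<phi> (E \<rho>)" .
  have "t * G \<le> a * p * G" using tap G0 by (rule mult_right_mono)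
  also have "\<dots> \<le> a * (p * (1 - expval \<phi> \<sigma>'))" using Gs p a1 by (simp add: mult_left_mono mult.assoc)
  also have "\<dots> \<le> a * (b * Qf \<phi> (E \<rho>))" using pq a1 by (simp add: mult_left_mono)
  finally have tG: "t * G \<le> a * b * Qf \<phi> (E \<rho>)" by (simp add: mult.assoc)
  have eq: "1 - expval \<phi> ((1 / t) *\<^sub>R E \<rho>) = Qf \<phi> (E \<rho>) / t"
    unfolding expval_scaleR Qf_def t_def[symmetric] using t t_def by (simp add: field_simps)
  have "G \<le> a * b * Qf \<phi> (E \<rho>) / t" using tG t t_def by (simp add: pos_le_divide_eq mult.commute)
  then have "G \<le> a * b * (1 - expval \<phi> ((1 / t) *\<^sub>R E \<rho>))" unfolding eq by simp
  then show ?thesis unfolding G_def t_def .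
qed


lemma ereal_ge1_nonneg: "(1::ereal) \<le> x \<Longrightarrow> 0 \<le> x"
  by (cases x) auto

lemma ereal_ge1_mult: "(1::ereal) \<le> x \<Longrightarrow> 1 \<le> y \<Longrightarrow> 1 \<le> x * y"
proof -
  assume x: "1 \<le> x" and y: "1 \<le> y"
  have x0: "0 \<le> x" using x by (rule ereal_ge1_nonneg)
  have "(1::ereal) = 1 * 1" by simp
  also have "\<dots> \<le> x * 1" using x by (intro ereal_mult_right_mono) auto
  also have "\<dots> \<le> x * y" using x0 y by (intro ereal_mult_left_mono) auto
  finally show ?thesis .
qed

lemma ereal_ge1_cases: "(1::ereal) \<le> x \<Longrightarrow> x = \<infinity> \<or> (\<exists>w. x = ereal w \<and> w \<ge> 1)"
  by (cases x) auto

theorem lemma4: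
  fixes Fin :: "('n::finite) cmat set" and Fout :: "('m::finite) cmat set"
    and \<rho> :: "'n cmat" and \<tau> :: "'m cmat" and \<phi> :: "complex^'m" and \<epsilon> :: real
  assumes "free_set Fin" and "free_set Fout"
    and "density \<rho>"
    and "pure_state \<phi>" and "proj \<phi> \<notin> Fout"
    and "density \<tau>"
    and "prob_transform Fin Fout \<rho> \<tau>"
    and "fidelity \<tau> (proj \<phi>) \<ge> 1 - \<epsilon>"
  shows "ereal (1 - FF Fout \<phi>) / OmegaF Fin \<rho> \<le> ereal \<epsilon>
    \<and> ereal (lambda_min \<rho> * (1 - FF Fout \<phi>)) / RF Fin \<rho>
        \<le> ereal (1 - FF Fout \<phi>) / OmegaF Fin \<rho>"
proof -
  note Fin = assms(1) and Fout = assms(2) and rho = assms(3) and phi = assms(4)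
    and tau = assms(6) and pt = assms(7) and fid = assms(8)
  define G where "G = 1 - FF Fout \<phi>"
  define \<Omega> where "\<Omega> = OmegaF Fin \<rho>"
  define R where "R = RF Fin \<rho>"
  define lam where "lam = lambda_min \<rho>"
  have G0: "G \<ge> 0" unfolding G_def using FF_le1[OF Fout phi] by simp
  have fidv: "1 - \<epsilon> \<le> expval \<phi> \<tau>" using fid fidelity_pure[OF tau phi] by simp
  have eps0: "\<epsilon> \<ge> 0" using fidv expval_le1[OF phi tau] by simp
  have dens: "density \<sigma>" if "\<sigma> \<in> Fin" for \<sigma> using Fin that free_set_def by blast
  have key: "G \<le> a * b * \<epsilon>"
    if sig: "\<sigma> \<in> Fin" and ra: "loewner_le \<rho> (a *\<^sub>R \<sigma>)" and sb: "loewner_le \<sigma> (b *\<^sub>R \<rho>)" for \<sigma> a b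
  proof -
    define T where "T = {X. G \<le> a * b * (1 - expval \<phi> X)}"
    have cT: "closed T" unfolding T_def
      by (intro closed_Collect_le continuous_intros cont_expval)
    have "{(1 / Re (trace (E \<rho>))) *\<^sub>R E \<rho> | E. E \<in> RNG_ops Fin Fout \<and> Re (trace (E \<rho>)) > 0} \<subseteq> T"
      unfolding T_def G_def using step_E[OF Fout Fin rho phi sig ra sb] by blast
    then have "\<tau> \<in> T" using closure_minimal[OF _ cT] pt unfolding prob_transform_def by blast
    then have g: "G \<le> a * b * (1 - expval \<phi> \<tau>)" unfolding T_def by simp
    have a1: "a \<ge> 1" by (rule Rset_ge1[OF rho dens[OF sig] ra])
    have b1: "b \<ge> 1" by (rule Rset_ge1[OF dens[OF sig] rho sb])
    have "a * b * (1 - expval \<phi> \<tau>) \<le> a * b * \<epsilon>" using fidv a1 b1 by (intro mult_left_mono) auto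
    then show ?thesis using g by simp
  qed
  have Om1: "\<Omega> \<ge> 1" unfolding \<Omega>_def OmegaF_def
    by (rule INF_greatest) (intro ereal_ge1_mult Rmax_ge1 rho dens; assumption)
  have R1: "R \<ge> 1" unfolding R_def RF_def
    by (rule INF_greatest) (intro Rmax_ge1 rho dens; assumption)
  have RHS0: "ereal G / \<Omega> \<ge> 0"
    using ereal_ge1_cases[OF Om1] G0 by auto
  have part1: "ereal G / \<Omega> \<le> ereal \<epsilon>"
  proof (cases "\<Omega> = \<infinity>")
    case True then show ?thesis using eps0 by simp
  next
    case False
    then obtain w where w: "\<Omega> = ereal w" "w \<ge> 1" using ereal_ge1_cases[OF Om1] by blast
    have "G \<le> w * \<epsilon>"
    proof (rule field_le_epsilon)
      fix e :: real assume e: "e > 0"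
      define \<delta> where "\<delta> = e / (\<epsilon> + 1)"
      have d0: "\<delta> > 0" unfolding \<delta>_def using e eps0 by simp
      have "\<Omega> < ereal (w + \<delta>)" using w d0 by simp
      then obtain \<sigma> where sig: "\<sigma> \<in> Fin" and lt: "Rmax \<rho> \<sigma> * Rmax \<sigma> \<rho> < ereal (w + \<delta>)"
        unfolding \<Omega>_def OmegaF_def INF_less_iff by blast
      have r1: "Rmax \<rho> \<sigma> \<ge> 1" "Rmax \<sigma> \<rho> \<ge> 1" using Rmax_ge1 rho dens[OF sig] by auto
      have f1: "Rmax \<rho> \<sigma> \<noteq> \<infinity>"
      proof
        assume "Rmax \<rho> \<sigma> = \<infinity>"
        then have h: "Rmax \<rho> \<sigma> * Rmax \<sigma> \<rho> = \<infinity>" using r1 by (cases "Rmax \<sigma> \<rho>") auto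
        show False using lt unfolding h by simp
      qed
      have f2: "Rmax \<sigma> \<rho> \<noteq> \<infinity>"
      proof
        assume "Rmax \<sigma> \<rho> = \<infinity>"
        then have h: "Rmax \<rho> \<sigma> * Rmax \<sigma> \<rho> = \<infinity>" using r1 by (cases "Rmax \<rho> \<sigma>") auto
        show False using lt unfolding h by simp
      qed
      obtain a where a: "Rmax \<rho> \<sigma> = ereal a" "loewner_le \<rho> (a *\<^sub>R \<sigma>)"
        using Rmax_finite[OF rho dens[OF sig] f1] by blast
      obtain b where b: "Rmax \<sigma> \<rho> = ereal b" "loewner_le \<sigma> (b *\<^sub>R \<rho>)"
        using Rmax_finite[OF dens[OF sig] rho f2] by blast
      have ab: "a * b < w + \<delta>" using lt a b by simp
      have "G \<le> a * b * \<epsilon>" by (rule key[OF sig a(2) b(2)])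
      also have "\<dots> \<le> (w + \<delta>) * \<epsilon>" using ab eps0 by (intro mult_right_mono) auto
      also have "\<dots> = w * \<epsilon> + e * (\<epsilon> / (\<epsilon> + 1))" unfolding \<delta>_def by (simp add: algebra_simps)
      also have "\<dots> \<le> w * \<epsilon> + e * 1" using e eps0 by (intro add_left_mono mult_left_mono) auto
      finally show "G \<le> w * \<epsilon> + e" by simp
    qed
    then show ?thesis using w by (simp add: pos_divide_le_eq mult.commute)
  qed
  have part2: "ereal (lam * G) / R \<le> ereal G / \<Omega>"
  proof (cases "lam > 0 \<and> G > 0")
    case False
    then have "lam * G \<le> 0" using G0 by (auto simp: mult_nonpos_nonneg)
    then have "ereal (lam * G) / R \<le> 0"
      using ereal_ge1_cases[OF R1] by (auto simp: divide_nonpos_pos)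
    then show ?thesis using RHS0 by simp
  next
    case True
    then have l0: "lam > 0" and Gp: "G > 0" by auto
    have sr: "Rmax \<sigma> \<rho> \<le> ereal (1 / lam)" if sig: "\<sigma> \<in> Fin" for \<sigma>
    proof (rule Rmax_le)
      have ps: "psd \<sigma>" and pr: "psd \<rho>" using dens[OF sig] rho density_def by auto
      show "loewner_le \<sigma> ((1 / lam) *\<^sub>R \<rho>)"
        unfolding loewner_iff
      proof
        fix v
        have i1: "Im (cinner v (\<rho> *v v)) = 0" "Im (cinner v (\<sigma> *v v)) = 0" using ps pr psd_def by auto
        have q1: "lam * (norm v)^2 \<le> Re (cinner v (\<rho> *v v))" using lambda_min_le[OF pr] unfolding lam_def .
        have q2: "Re (cinner v (\<sigma> *v v)) \<le> (norm v)^2"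
          using quad_le_trace[OF ps, of v] density_trace[OF dens[OF sig]] by simp
        have "(norm v)^2 \<le> (1 / lam) * Re (cinner v (\<rho> *v v))"
          using q1 l0 by (simp add: field_simps)
        then show "1 / lam * Im (cinner v (\<rho> *v v)) - Im (cinner v (\<sigma> *v v)) = 0 \<and>
          0 \<le> 1 / lam * Re (cinner v (\<rho> *v v)) - Re (cinner v (\<sigma> *v v))"
          using i1 q2 by simp
      qed
    qed
    have OmR: "\<Omega> * ereal lam \<le> R"
      unfolding R_def RF_def
    proof (rule INF_greatest)
      fix \<sigma> assume sig: "\<sigma> \<in> Fin"
      have r0: "Rmax \<rho> \<sigma> \<ge> 0" using Rmax_ge1[OF rho dens[OF sig]] by (rule ereal_ge1_nonneg)
      have "\<Omega> \<le> Rmax \<rho> \<sigma> * Rmax \<sigma> \<rho>" unfolding \<Omega>_def OmegaF_def using sig by (rule INF_lower)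
      also have "\<dots> \<le> Rmax \<rho> \<sigma> * ereal (1 / lam)" using sr[OF sig] r0 by (rule ereal_mult_left_mono)
      finally have "\<Omega> * ereal lam \<le> Rmax \<rho> \<sigma> * ereal (1 / lam) * ereal lam"
        using l0 by (intro ereal_mult_right_mono) auto
      also have "\<dots> = Rmax \<rho> \<sigma>" using l0 by (simp add: mult.assoc)
      finally show "\<Omega> * ereal lam \<le> Rmax \<rho> \<sigma>" .
    qed
    show ?thesis
    proof (cases "R = \<infinity>")
      case True then show ?thesis using RHS0 by simp
    next
      case False
      then obtain r where r: "R = ereal r" "r \<ge> 1" using ereal_ge1_cases[OF R1] by blast
      have "\<Omega> \<noteq> \<infinity>" using OmR r l0 by auto
      then obtain w where w: "\<Omega> = ereal w" "w \<ge> 1" using ereal_ge1_cases[OF Om1] by blast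
      have wl: "w * lam \<le> r" using OmR r w by simp
      have "lam * G / r \<le> G / w"
      proof -
        have "lam * G * w \<le> G * r" using mult_left_mono[OF wl G0] by (simp add: mult_ac)
        then show ?thesis using r w by (simp add: field_simps)
      qed
      then show ?thesis using r w by simp
    qed
  qed
  show ?thesis using part1 part2 unfolding G_def \<Omega>_def R_def lam_def by simp
qed

end
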